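(* Let $n\geq 2$ and let $S_n=K_{1,n-1}$ be the star on $n$ vertices, with centre vertex $v$ (a vertex adjacent to all others). Let $c_0:V(S_n)\to\mathbb{Z}$ be any initial chip configuration. Let $\ell_M$ be a leaf with the maximum number of chips in $c_0$ among all leaves and $\ell_m$ a leaf with the minimum number of chips in $c_0$ among all leaves, and let $d_0=c_0(\ell_M)-c_0(\ell_m)$. Then the configuration is tight with pre-period length at most \[\left\lceil\frac{\max \{ 0,\ c_0(v) - c_0(\ell_M),\ c_0(\ell_m) - c_0(v) \}}{n}\right\rceil + 2d_0.\]
   Context: Diffusion process: for a finite simple graph $G$ and a chip configuration $c_t:V(G)\to\mathbb{Z}$ (negative values allowed), the next configuration is defined simultaneously for every vertex $u$ by $c_{t+1}(u)=c_t(u)-|\{w\in N(u): c_t(u)>c_t(w)\}|+|\{w\in N(u): c_t(u)<c_t(w)\}|$. Tight means the process is eventually fixed or eventually periodic with period length 2, i.e. $c_{t+2}=c_t$ for some $t$; the pre-period length is then the least $t\geq0$ with $c_{t+p}=c_t$ where $p$ is the minimal period. *)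

theory Defs
  imports Complex_Main
begin

text \<open>Graphs: finite vertex set V with symmetric irreflexive adjacency E.
  Configurations are functions from vertices to int; values outside V are left unchanged.\<close>

definition diffusion_step :: "'a set \<Rightarrow> ('a \<Rightarrow> 'a \<Rightarrow> bool) \<Rightarrow> ('a \<Rightarrow> int) \<Rightarrow> ('a \<Rightarrow> int)" where
  "diffusion_step V E c = (\<lambda>u. if u \<in> V then
       c u - int (card {w \<in> V. E u w \<and> c u > c w}) + int (card {w \<in> V. E u w \<and> c u < c w})
     else c u)"

definition diffusion :: "'a set \<Rightarrow> ('a \<Rightarrow> 'a \<Rightarrow> bool) \<Rightarrow> ('a \<Rightarrow> int) \<Rightarrow> nat \<Rightarrow> ('a \<Rightarrow> int)" where
  "diffusion V E c0 t = (diffusion_step V E ^^ t) c0"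

definition tight :: "'a set \<Rightarrow> ('a \<Rightarrow> 'a \<Rightarrow> bool) \<Rightarrow> ('a \<Rightarrow> int) \<Rightarrow> bool" where
  "tight V E c0 \<longleftrightarrow> (\<exists>t. diffusion V E c0 (t + 2) = diffusion V E c0 t)"

definition period :: "'a set \<Rightarrow> ('a \<Rightarrow> 'a \<Rightarrow> bool) \<Rightarrow> ('a \<Rightarrow> int) \<Rightarrow> nat" where
  "period V E c0 = (LEAST p. p > 0 \<and> (\<exists>t. diffusion V E c0 (t + p) = diffusion V E c0 t))"

definition preperiod :: "'a set \<Rightarrow> ('a \<Rightarrow> 'a \<Rightarrow> bool) \<Rightarrow> ('a \<Rightarrow> int) \<Rightarrow> nat" where
  "preperiod V E c0 = (LEAST t. diffusion V E c0 (t + period V E c0) = diffusion V E c0 t)"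

definition star_adj :: "nat \<Rightarrow> nat \<Rightarrow> nat \<Rightarrow> bool" where
  "star_adj n u w \<longleftrightarrow> u < n \<and> w < n \<and> ((u = 0 \<and> w \<noteq> 0) \<or> (w = 0 \<and> u \<noteq> 0))"

end

theory Submission
  imports Defs
begin

abbreviation S :: "nat \<Rightarrow> (nat \<Rightarrow> int) \<Rightarrow> (nat \<Rightarrow> int)" where
  "S n c \<equiv> diffusion_step {0..<n} (star_adj n) c"

definition mx :: "nat \<Rightarrow> (nat \<Rightarrow> int) \<Rightarrow> int" where
  "mx n c = Max (c ` {1..<n})"
definition mn :: "nat \<Rightarrow> (nat \<Rightarrow> int) \<Rightarrow> int" where
  "mn n c = Min (c ` {1..<n})"

lemma mx_ge: "l \<in> {1..<n} \<Longrightarrow> c l \<le> mx n c"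
  unfolding mx_def by auto
lemma mn_le: "l \<in> {1..<n} \<Longrightarrow> mn n c \<le> c l"
  unfolding mn_def by auto
lemma mx_in: "n \<ge> 2 \<Longrightarrow> \<exists>l\<in>{1..<n}. c l = mx n c"
proof -
  assume "n \<ge> 2"
  then have "c ` {1..<n} \<noteq> {}" by auto
  then have "Max (c ` {1..<n}) \<in> c ` {1..<n}" by (intro Max_in) auto
  then show ?thesis unfolding mx_def by auto
qed
lemma mn_in: "n \<ge> 2 \<Longrightarrow> \<exists>l\<in>{1..<n}. c l = mn n c"
proof -
  assume "n \<ge> 2"
  then have "c ` {1..<n} \<noteq> {}" by auto
  then have "Min (c ` {1..<n}) \<in> c ` {1..<n}" by (intro Min_in) auto
  then show ?thesis unfolding mn_def by auto
qed
lemma mx_le: "n \<ge> 2 \<Longrightarrow> (\<And>l. l \<in> {1..<n} \<Longrightarrow> c l \<le> x) \<Longrightarrow> mx n c \<le> x"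
  by (metis mx_in)
lemma mn_ge: "n \<ge> 2 \<Longrightarrow> (\<And>l. l \<in> {1..<n} \<Longrightarrow> x \<le> c l) \<Longrightarrow> x \<le> mn n c"
  by (metis mn_in)

lemma step_out: "u \<notin> {0..<n} \<Longrightarrow> S n c u = c u"
  unfolding diffusion_step_def by simp

lemma step_leaf: assumes "l \<in> {1..<n}"
  shows "S n c l = (if c l < c 0 then c l + 1 else if c 0 < c l then c l - 1 else c l)"
proof -
  have e1: "{w \<in> {0..<n}. star_adj n l w \<and> c l > c w} = (if c l > c 0 then {0} else {})"
    using assms by (auto simp: star_adj_def)
  have e2: "{w \<in> {0..<n}. star_adj n l w \<and> c l < c w} = (if c l < c 0 then {0} else {})"
    using assms by (auto simp: star_adj_def)
  show ?thesis using assms unfolding diffusion_step_def e1 e2 by auto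
qed

lemma step_centre: assumes "n \<ge> 2"
  shows "S n c 0 = c 0 - int (card {w \<in> {1..<n}. c w < c 0}) + int (card {w \<in> {1..<n}. c 0 < c w})"
proof -
  have e1: "{w \<in> {0..<n}. star_adj n 0 w \<and> c 0 > c w} = {w \<in> {1..<n}. c w < c 0}"
    using assms by (auto simp: star_adj_def)
  have e2: "{w \<in> {0..<n}. star_adj n 0 w \<and> c 0 < c w} = {w \<in> {1..<n}. c 0 < c w}"
    using assms by (auto simp: star_adj_def)
  show ?thesis using assms unfolding diffusion_step_def e1 e2 by auto
qed

lemma card_le: "card {w \<in> {1..<n}. Q w} \<le> n - 1"
proof -
  have "card {w \<in> {1..<n}. Q w} \<le> card {1..<n}" by (intro card_mono) auto
  then show ?thesis by simp
qed
lemma card_all: "(\<And>w. w \<in> {1..<n} \<Longrightarrow> Q w) \<Longrightarrow> card {w \<in> {1..<n}. Q w} = n - 1"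
proof -
  assume "\<And>w. w \<in> {1..<n} \<Longrightarrow> Q w"
  then have "{w \<in> {1..<n}. Q w} = {1..<n}" by auto
  then show ?thesis by simp
qed
lemma card_none: "(\<And>w. w \<in> {1..<n} \<Longrightarrow> \<not> Q w) \<Longrightarrow> card {w \<in> {1..<n}. Q w} = 0"
proof -
  assume "\<And>w. w \<in> {1..<n} \<Longrightarrow> \<not> Q w"
  then have "{w \<in> {1..<n}. Q w} = {}" by auto
  then show ?thesis by (metis card.empty)
qed

definition P :: "nat \<Rightarrow> (nat \<Rightarrow> int) \<Rightarrow> int" where
  "P n c = (max 0 (max (c 0 - mx n c) (mn n c - c 0)) + int n - 1) div int n + 2 * (mx n c - mn n c)"

lemma div_one: assumes "(n::int) > 0" "0 \<le> x" "x < n" shows "x div n = 0"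
  using assms by simp

lemma main:
  assumes n: "n \<ge> 2"
  shows "S n (S n c) = c \<or> P n (S n c) \<le> P n c - 1"
proof -
  define v where "v = c 0"
  define M where "M = mx n c"
  define m where "m = mn n c"
  define c' where "c' = S n c"
  have L1: "1 \<in> {1..<n}" using n by auto
  have mM: "m \<le> M" using mx_ge[OF L1, of c] mn_le[OF L1, of c] unfolding M_def m_def by simp
  have lb: "\<And>l. l \<in> {1..<n} \<Longrightarrow> m \<le> c l \<and> c l \<le> M" unfolding M_def m_def
    using mx_ge mn_le by blast
  have nn: "int (n - 1) = int n - 1" using n by simp
  have Pc: "P n c = (max 0 (max (v - M) (m - v)) + int n - 1) div int n + 2 * (M - m)"
    unfolding P_def v_def M_def m_def ..
  have Pc': "P n c' = (max 0 (max (c' 0 - mx n c') (mn n c' - c' 0)) + int n - 1) div int n + 2 * (mx n c' - mn n c')"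
    unfolding P_def ..
  consider (A) "v > M" | (B) "v < m" | (C) "m \<le> v \<and> v \<le> M" by linarith
  then show ?thesis
  proof cases
    case A
    have lv: "\<And>l. l \<in> {1..<n} \<Longrightarrow> c' l = c l + 1"
      unfolding c'_def using step_leaf lb A v_def by fastforce
    have cen: "c' 0 = v - (int n - 1)"
    proof -
      have "card {w \<in> {1..<n}. c w < c 0} = n - 1" using lb A v_def by (intro card_all) fastforce
      moreover have "card {w \<in> {1..<n}. c 0 < c w} = 0" using lb A v_def by (intro card_none) fastforce
      ultimately show ?thesis unfolding c'_def using step_centre[OF n, of c] nn v_def by simp
    qed
    have M': "mx n c' = M + 1"
    proof (rule antisym)
      show "mx n c' \<le> M + 1"
      proof (rule mx_le[OF n])
        fix l assume l: "l \<in> {1..<n}"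
        show "c' l \<le> M + 1" using lv[OF l] lb[OF l] by linarith
      qed
      obtain l where "l \<in> {1..<n}" "c l = M" using mx_in[OF n] M_def by metis
      then show "M + 1 \<le> mx n c'" using mx_ge[of l n c'] lv by auto
    qed
    have m': "mn n c' = m + 1"
    proof (rule antisym)
      show "m + 1 \<le> mn n c'"
      proof (rule mn_ge[OF n])
        fix l assume l: "l \<in> {1..<n}"
        show "m + 1 \<le> c' l" using lv[OF l] lb[OF l] by linarith
      qed
      obtain l where "l \<in> {1..<n}" "c l = m" using mn_in[OF n] m_def by metis
      then show "mn n c' \<le> m + 1" using mn_le[of l n c'] lv by auto
    qed
    show ?thesis
    proof (cases "v - M > int n")
      case True
      have E: "max 0 (max (c' 0 - (M + 1)) (m + 1 - c' 0)) = v - M - int n"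
        using True cen M' m' mM by simp
      have "(v - M + int n - 1) div int n = (v - M - 1 + int n) div int n" by (simp add: algebra_simps)
      also have "\<dots> = (v - M - 1) div int n + 1" using n by simp
      moreover have E0: "max 0 (max (v - M) (m - v)) = v - M" using A mM by simp
      ultimately have "P n c' = P n c - 1" unfolding Pc Pc' E E0 M' m' using A
        by (simp add: algebra_simps)
      then show ?thesis by (simp add: c'_def)
    next
      case False
      show ?thesis
      proof (cases "v - m \<ge> int n")
        case True
        have E: "max 0 (max (c' 0 - (M + 1)) (m + 1 - c' 0)) = 0"
          using True False cen M' m' mM by simp
        have "(int n - 1) div int n = 0" using n by (intro div_one) auto
        moreover have "1 \<le> (v - M + int n - 1) div int n"
        proof -
          have "int n div int n \<le> (v - M + int n - 1) div int n" using A n by (intro zdiv_mono1) auto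
          then show ?thesis using n by simp
        qed
        moreover have E0: "max 0 (max (v - M) (m - v)) = v - M" using A mM by simp
        ultimately show ?thesis unfolding c'_def[symmetric] Pc Pc' E E0 M' m' using A by simp
      next
        case False2: False
        have lv2: "\<And>l. l \<in> {1..<n} \<Longrightarrow> c' l > c' 0" using lv cen lb False2 by fastforce
        have "S n c' = c"
        proof
          fix u
          consider "u = 0" | "u \<in> {1..<n}" | "u \<notin> {0..<n}" by fastforce
          then show "S n c' u = c u"
          proof cases
            case 1
            have "card {w \<in> {1..<n}. c' w < c' 0} = 0" using lv2 by (intro card_none) fastforce
            moreover have "card {w \<in> {1..<n}. c' 0 < c' w} = n - 1" using lv2 by (intro card_all) fastforce
            ultimately show ?thesis using step_centre[OF n, of c'] nn cen 1 v_def by simp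
          next
            case 2
            then show ?thesis using step_leaf[OF 2, of c'] lv2[OF 2] lv[OF 2] by simp
          next
            case 3
            then show ?thesis using step_out[OF 3] unfolding c'_def by simp
          qed
        qed
        then show ?thesis by (simp add: c'_def)
      qed
    qed
  next
    case B
    have lv: "\<And>l. l \<in> {1..<n} \<Longrightarrow> c' l = c l - 1"
      unfolding c'_def using step_leaf lb B v_def by fastforce
    have cen: "c' 0 = v + (int n - 1)"
    proof -
      have "card {w \<in> {1..<n}. c w < c 0} = 0" using lb B v_def by (intro card_none) fastforce
      moreover have "card {w \<in> {1..<n}. c 0 < c w} = n - 1" using lb B v_def by (intro card_all) fastforce
      ultimately show ?thesis unfolding c'_def using step_centre[OF n, of c] nn v_def by simp
    qed
    have M': "mx n c' = M - 1"
    proof (rule antisym)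
      show "mx n c' \<le> M - 1"
      proof (rule mx_le[OF n])
        fix l assume l: "l \<in> {1..<n}"
        show "c' l \<le> M - 1" using lv[OF l] lb[OF l] by linarith
      qed
      obtain l where "l \<in> {1..<n}" "c l = M" using mx_in[OF n] M_def by metis
      then show "M - 1 \<le> mx n c'" using mx_ge[of l n c'] lv by auto
    qed
    have m': "mn n c' = m - 1"
    proof (rule antisym)
      show "m - 1 \<le> mn n c'"
      proof (rule mn_ge[OF n])
        fix l assume l: "l \<in> {1..<n}"
        show "m - 1 \<le> c' l" using lv[OF l] lb[OF l] by linarith
      qed
      obtain l where "l \<in> {1..<n}" "c l = m" using mn_in[OF n] m_def by metis
      then show "mn n c' \<le> m - 1" using mn_le[of l n c'] lv by auto
    qed
    show ?thesis
    proof (cases "m - v > int n")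
      case True
      have E: "max 0 (max (c' 0 - (M - 1)) (m - 1 - c' 0)) = m - v - int n"
        using True cen M' m' mM by simp
      have "(m - v + int n - 1) div int n = (m - v - 1 + int n) div int n" by (simp add: algebra_simps)
      also have "\<dots> = (m - v - 1) div int n + 1" using n by simp
      moreover have E0: "max 0 (max (v - M) (m - v)) = m - v" using B mM by simp
      ultimately have "P n c' = P n c - 1" unfolding Pc Pc' E E0 M' m' using B
        by (simp add: algebra_simps)
      then show ?thesis by (simp add: c'_def)
    next
      case False
      show ?thesis
      proof (cases "M - v \<ge> int n")
        case True
        have E: "max 0 (max (c' 0 - (M - 1)) (m - 1 - c' 0)) = 0"
          using True False cen M' m' mM by simp
        have "(int n - 1) div int n = 0" using n by (intro div_one) auto
        moreover have "1 \<le> (m - v + int n - 1) div int n"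
        proof -
          have "int n div int n \<le> (m - v + int n - 1) div int n" using B n by (intro zdiv_mono1) auto
          then show ?thesis using n by simp
        qed
        moreover have E0: "max 0 (max (v - M) (m - v)) = m - v" using B mM by simp
        ultimately show ?thesis unfolding c'_def[symmetric] Pc Pc' E E0 M' m' using B by simp
      next
        case False2: False
        have lv2: "\<And>l. l \<in> {1..<n} \<Longrightarrow> c' l < c' 0" using lv cen lb False2 by fastforce
        have "S n c' = c"
        proof
          fix u
          consider "u = 0" | "u \<in> {1..<n}" | "u \<notin> {0..<n}" by fastforce
          then show "S n c' u = c u"
          proof cases
            case 1
            have "card {w \<in> {1..<n}. c' w < c' 0} = n - 1" using lv2 by (intro card_all) fastforce
            moreover have "card {w \<in> {1..<n}. c' 0 < c' w} = 0" using lv2 by (intro card_none) fastforce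
            ultimately show ?thesis using step_centre[OF n, of c'] nn cen 1 v_def by simp
          next
            case 2
            then show ?thesis using step_leaf[OF 2, of c'] lv2[OF 2] lv[OF 2] by simp
          next
            case 3
            then show ?thesis using step_out[OF 3] unfolding c'_def by simp
          qed
        qed
        then show ?thesis by (simp add: c'_def)
      qed
    qed
  next
    case C
    show ?thesis
    proof (cases "M = m")
      case True
      have eq: "c l = c 0" if l: "l \<in> {1..<n}" for l using lb[OF l] C True v_def by linarith
      have fix1: "S n c = c"
      proof
        fix u
        consider "u = 0" | "u \<in> {1..<n}" | "u \<notin> {0..<n}" by fastforce
        then show "S n c u = c u"
        proof cases
          case 1
          have h1: "card {w \<in> {1..<n}. c w < c 0} = 0" by (rule card_none) (simp add: eq)
          have h2: "card {w \<in> {1..<n}. c 0 < c w} = 0" by (rule card_none) (simp add: eq)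
          show ?thesis using step_centre[OF n, of c] 1 unfolding h1 h2 by simp
        next
          case 2
          then show ?thesis using step_leaf[OF 2, of c] eq[OF 2] by simp
        next
          case 3
          then show ?thesis using step_out[OF 3] by simp
        qed
      qed
      then show ?thesis by simp
    next
      case False
      have lv: "c' l \<le> max v (M - 1) \<and> min v (m + 1) \<le> c' l" if l: "l \<in> {1..<n}" for l
        unfolding c'_def using step_leaf[OF l, of c] lb[OF l] v_def by (auto split: if_splits)
      have d': "mx n c' - mn n c' \<le> M - m - 1"
      proof -
        have "mx n c' \<le> max v (M - 1)" using n lv by (intro mx_le) auto
        moreover have "min v (m + 1) \<le> mn n c'" using n lv by (intro mn_ge) auto
        ultimately show ?thesis using C False mM by linarith
      qed
      have hi: "v \<le> mx n c'"
      proof -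
        obtain l where l: "l \<in> {1..<n}" "c l = M" using mx_in[OF n] M_def by metis
        have "v \<le> c' l" unfolding c'_def using step_leaf[OF l(1), of c] l C v_def by auto
        then show ?thesis using mx_ge[OF l(1), of c'] by simp
      qed
      have lo: "mn n c' \<le> v"
      proof -
        obtain l where l: "l \<in> {1..<n}" "c l = m" using mn_in[OF n] m_def by metis
        have "c' l \<le> v" unfolding c'_def using step_leaf[OF l(1), of c] l C v_def by auto
        then show ?thesis using mn_le[OF l(1), of c'] by simp
      qed
      have cen: "v - (int n - 1) \<le> c' 0 \<and> c' 0 \<le> v + (int n - 1)"
        unfolding c'_def using step_centre[OF n, of c] card_le[of n "\<lambda>w. c w < c 0"]
          card_le[of n "\<lambda>w. c 0 < c w"] nn v_def by linarith
      define E' where "E' = max 0 (max (c' 0 - mx n c') (mn n c' - c' 0))"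
      have "0 \<le> E'" "E' \<le> int n - 1" unfolding E'_def using hi lo cen by auto
      then have "(E' + int n - 1) div int n \<le> (2 * int n - 1) div int n" by (intro zdiv_mono1) auto
      also have "(2 * int n - 1) div int n \<le> 1"
      proof -
        have "(2 * int n - 1) div int n = (int n - 1 + int n) div int n" by (simp add: algebra_simps)
        also have "\<dots> = (int n - 1) div int n + 1" by (rule div_add_self2) (use n in simp)
        also have "(int n - 1) div int n = 0" using n by (intro div_one) auto
        finally show ?thesis by simp
      qed
      finally have e1: "(E' + int n - 1) div int n \<le> 1" .
      have e0: "(max 0 (max (v - M) (m - v)) + int n - 1) div int n = 0"
        using C n by (intro div_one) auto
      have "P n c' \<le> 1 + 2 * (M - m - 1)" unfolding Pc' E'_def[symmetric] using add_mono[OF e1 mult_left_mono[OF d', of 2]] by simp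
      moreover have "P n c = 2 * (M - m)" unfolding Pc e0 by simp
      ultimately show ?thesis unfolding c'_def by simp
    qed
  qed
qed

lemma P_nonneg: assumes n: "n \<ge> 2" shows "0 \<le> P n c"
proof -
  have L1: "1 \<in> {1..<n}" using n by auto
  have "mn n c \<le> mx n c" using mx_ge[OF L1, of c] mn_le[OF L1, of c] by simp
  moreover have "0 \<le> (max 0 (max (c 0 - mx n c) (mn n c - c 0)) + int n - 1) div int n"
    using n by (intro div_int_pos_iff[THEN iffD2]) auto
  ultimately show ?thesis unfolding P_def by simp
qed

lemma exT: assumes n: "n \<ge> 2"
  shows "\<exists>T. int T \<le> P n c \<and> (S n ^^ (T + 2)) c = (S n ^^ T) c"
proof (induction "nat (P n c)" arbitrary: c rule: less_induct)
  case less
  show ?case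
  proof (cases "S n (S n c) = c")
    case True
    then show ?thesis using P_nonneg[OF n, of c] by (intro exI[of _ 0]) (simp add: numeral_2_eq_2)
  next
    case False
    then have lt: "P n (S n c) \<le> P n c - 1" using main[OF n, of c] by simp
    then have "nat (P n (S n c)) < nat (P n c)" using P_nonneg[OF n, of "S n c"] by simp
    from less[OF this] obtain T where T: "int T \<le> P n (S n c)" "(S n ^^ (T + 2)) (S n c) = (S n ^^ T) (S n c)"
      by blast
    have "(S n ^^ (Suc T + 2)) c = (S n ^^ Suc T) c"
      using T(2) by (simp only: funpow_Suc_right add_Suc o_apply)
    then show ?thesis using T(1) lt by (intro exI[of _ "Suc T"]) simp
  qed
qed

lemma ceil_bound: assumes "(n::nat) > 0" "0 \<le> E"
  shows "(E + int n - 1) div int n \<le> ceiling (real_of_int E / real n)"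
proof -
  define q where "q = ceiling (real_of_int E / real n)"
  have "real_of_int E / real n \<le> of_int q" unfolding q_def by (rule le_of_int_ceiling)
  then have "real_of_int E \<le> of_int q * real n" using assms by (simp add: pos_divide_le_eq)
  then have "E \<le> q * int n" by (metis of_int_le_iff of_int_mult of_int_of_nat_eq)
  then have "(E + int n - 1) div int n \<le> (int n - 1 + q * int n) div int n"
    using assms by (intro zdiv_mono1) auto
  also have "\<dots> = q + (int n - 1) div int n" using assms by simp
  also have "(int n - 1) div int n = 0" using assms by (intro div_one) auto
  finally show ?thesis unfolding q_def by simp
qed

lemma shift: "diffusion V E c0 (t + k) = (diffusion_step V E ^^ k) (diffusion V E c0 t)"
  unfolding diffusion_def by (simp add: funpow_add add.commute)

lemma per2: assumes "diffusion V E c0 (a + 2) = diffusion V E c0 a"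
  shows "diffusion V E c0 (a + 2 * j + s) = diffusion V E c0 (a + s)"
proof (induction j)
  case 0 then show ?case by simp
next
  case (Suc j)
  have "diffusion V E c0 (a + 2 * Suc j + s) = diffusion V E c0 ((a + 2) + (2 * j + s))"
    by (simp add: algebra_simps)
  also have "\<dots> = (diffusion_step V E ^^ (2 * j + s)) (diffusion V E c0 (a + 2))" by (rule shift)
  also have "\<dots> = (diffusion_step V E ^^ (2 * j + s)) (diffusion V E c0 a)" using assms by simp
  also have "\<dots> = diffusion V E c0 (a + 2 * j + s)" using shift[symmetric] by (simp add: add.assoc)
  finally show ?case using Suc by simp
qed

lemma per1: assumes "diffusion V E c0 (t + 1) = diffusion V E c0 t"
  shows "diffusion V E c0 (t + s) = diffusion V E c0 t"
proof (induction s)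
  case 0 then show ?case by simp
next
  case (Suc s)
  have "diffusion V E c0 (t + Suc s) = diffusion V E c0 ((t + 1) + s)" by simp
  also have "\<dots> = (diffusion_step V E ^^ s) (diffusion V E c0 (t + 1))" by (rule shift)
  also have "\<dots> = (diffusion_step V E ^^ s) (diffusion V E c0 t)" using assms by simp
  also have "\<dots> = diffusion V E c0 (t + s)" by (rule shift[symmetric])
  finally show ?case using Suc by simp
qed

theorem theorem19:
  fixes n :: nat and c0 :: "nat \<Rightarrow> int" and lM lm :: nat
  assumes "n \<ge> 2"
    and "lM \<in> {1..<n}" and "\<forall>l\<in>{1..<n}. c0 l \<le> c0 lM"
    and "lm \<in> {1..<n}" and "\<forall>l\<in>{1..<n}. c0 lm \<le> c0 l"
  shows "tight {0..<n} (star_adj n) c0 \<and>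
    int (preperiod {0..<n} (star_adj n) c0)
      \<le> ceiling (real_of_int (max 0 (max (c0 0 - c0 lM) (c0 lm - c0 0))) / real n)
         + 2 * (c0 lM - c0 lm)"
proof -
  note n = assms(1)
  let ?D = "diffusion {0..<n} (star_adj n) c0"
  obtain T where T: "int T \<le> P n c0" "(S n ^^ (T + 2)) c0 = (S n ^^ T) c0"
    using exT[OF n] by blast
  have DT: "?D (T + 2) = ?D T" using T(2) unfolding diffusion_def .
  have tight: "tight {0..<n} (star_adj n) c0" unfolding tight_def using DT by blast
  define p where "p = period {0..<n} (star_adj n) c0"
  have ex: "\<exists>p. p > 0 \<and> (\<exists>t. ?D (t + p) = ?D t)" using DT by (intro exI[of _ 2]) auto
  have p2: "p \<le> 2" unfolding p_def period_def by (rule Least_le) (use DT in auto)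
  have pp: "p > 0 \<and> (\<exists>t. ?D (t + p) = ?D t)" unfolding p_def period_def by (rule LeastI_ex[OF ex])
  have DTp: "?D (T + p) = ?D T"
  proof (cases "p = 2")
    case True then show ?thesis using DT by simp
  next
    case False
    then have p1: "p = 1" using p2 pp by linarith
    then obtain t0 where t0: "?D (t0 + 1) = ?D t0" using pp by blast
    have "?D (T + 2 * t0 + 0) = ?D (T + 0)" by (rule per2[OF DT])
    moreover have "?D (T + 2 * t0 + 1) = ?D (T + 1)" by (rule per2[OF DT])
    moreover have "?D (T + 2 * t0) = ?D t0"
    proof -
      have "T + 2 * t0 = t0 + (T + t0)" by simp
      then show ?thesis using per1[OF t0, of "T + t0"] by metis
    qed
    moreover have "?D (T + 2 * t0 + 1) = ?D t0"
    proof -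
      have "T + 2 * t0 + 1 = t0 + (T + t0 + 1)" by simp
      then show ?thesis using per1[OF t0, of "T + t0 + 1"] by metis
    qed
    ultimately show ?thesis using p1 by simp
  qed
  have pre: "preperiod {0..<n} (star_adj n) c0 \<le> T"
    unfolding preperiod_def p_def[symmetric] by (rule Least_le) (rule DTp)
  have MX: "mx n c0 = c0 lM"
    using mx_le[OF n, of c0 "c0 lM"] mx_ge[OF assms(2), of c0] assms(3) by fastforce
  have MN: "mn n c0 = c0 lm"
    using mn_ge[OF n, of "c0 lm" c0] mn_le[OF assms(4), of c0] assms(5) by fastforce
  have "P n c0 \<le> ceiling (real_of_int (max 0 (max (c0 0 - c0 lM) (c0 lm - c0 0))) / real n)
         + 2 * (c0 lM - c0 lm)"
    unfolding P_def MX MN using ceil_bound[of n "max 0 (max (c0 0 - c0 lM) (c0 lm - c0 0))"] n by simp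
  then show ?thesis using tight pre T(1) by linarith
qed

end
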